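(* Let $\mathcal{D}$ be a finite nonempty set of disks in the plane with positive radii, and let $\delta^*$ be the minimum value $\delta\ge0$ for which there exist two points $p_1,p_2\in\mathbb{R}^2$ with $D(\delta)\cap\{p_1,p_2\}\neq\emptyset$ for every $D\in\mathcal{D}$. Let $p_1,p_2$ be two points with $D(\delta^* )\cap\{p_1,p_2\}\neq\emptyset$ for every $D\in\mathcal{D}$. Then $\delta^*=0$, or one of $p_1,p_2$ is a common boundary point of three $\delta^*$-inflated disks $D(\delta^* )$, $D\in\mathcal{D}$, or one of $p_1,p_2$ is a tangent point of two $\delta^*$-inflated disks.
   Context: For a disk $D$ with center $c(D)$ and radius $r(D)$ and a real $\delta\ge0$, the $\delta$-inflated disk $D(\delta)$ is the closed disk with center $c(D)$ and radius $r(D)+\delta$. A tangent point of two disks is a point where their boundary circles touch (the disks intersect in exactly that point). The paper assumes throughout that no disk of $\mathcal{D}$ contains another disk of $\mathcal{D}$. *)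

theory Defs
  imports "HOL-Analysis.Analysis"
begin

text \<open>A disk in the plane is represented by the pair (center, radius).\<close>
type_synonym disk = "(real^2) \<times> real"

definition center :: "disk \<Rightarrow> real^2" where "center D = fst D"
definition radius :: "disk \<Rightarrow> real" where "radius D = snd D"

definition disk_set :: "disk \<Rightarrow> (real^2) set" where
  "disk_set D = cball (center D) (radius D)"

definition inflated :: "disk \<Rightarrow> real \<Rightarrow> (real^2) set" where
  "inflated D \<delta> = cball (center D) (radius D + \<delta>)"

definition inflated_circle :: "disk \<Rightarrow> real \<Rightarrow> (real^2) set" where
  "inflated_circle D \<delta> = sphere (center D) (radius D + \<delta>)"

definition stabs :: "disk set \<Rightarrow> real \<Rightarrow> real^2 \<Rightarrow> real^2 \<Rightarrow> bool" where
  "stabs \<D> \<delta> p1 p2 \<longleftrightarrow> (\<forall>D\<in>\<D>. inflated D \<delta> \<inter> {p1, p2} \<noteq> {})"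

definition tangent_point :: "(real^2) set \<Rightarrow> (real^2) set \<Rightarrow> real^2 \<Rightarrow> bool" where
  "tangent_point A B p \<longleftrightarrow> A \<inter> B = {p}"

end

theory Submission
  imports Defs
begin

lemma strict_conv:
  fixes c p q :: "real^2"
  assumes "dist c p \<le> R" "dist c q \<le> R" "p \<noteq> q" "0 < t" "t < 1"
  shows "dist c (p + t *\<^sub>R (q - p)) < R"
proof -
  define a where "a = c - p"
  define b where "b = c - q"
  have e: "c - (p + t *\<^sub>R (q - p)) = (1 - t) *\<^sub>R a + t *\<^sub>R b"
    by (simp add: a_def b_def algebra_simps)
  have id: "(norm ((1 - t) *\<^sub>R a + t *\<^sub>R b))^2
      = (1-t) * (norm a)^2 + t * (norm b)^2 - t*(1-t)*(norm (a - b))^2"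
    by (simp add: power2_norm_eq_inner inner_add_left inner_add_right inner_diff_left
        inner_diff_right inner_commute algebra_simps)
  have na: "norm a \<le> R" using assms(1) by (simp add: a_def dist_norm)
  have nb: "norm b \<le> R" using assms(2) by (simp add: b_def dist_norm)
  have R0: "0 \<le> R" using na norm_ge_zero order_trans by blast
  have "a - b \<noteq> 0" using assms(3) by (simp add: a_def b_def)
  hence pos: "(norm (a - b))^2 > 0" by simp
  have "(norm a)^2 \<le> R^2" using na by (simp add: power_mono)
  moreover have "(norm b)^2 \<le> R^2" using nb by (simp add: power_mono)
  moreover have "t*(1-t) > 0" using assms by simp
  ultimately have "(norm ((1 - t) *\<^sub>R a + t *\<^sub>R b))^2 < R^2"
    unfolding id using pos assms(4,5)
  proof -
    assume h1: "(norm a)^2 \<le> R^2" and h2: "(norm b)^2 \<le> R^2" and h3: "t*(1-t) > 0"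
    have "(1-t) * (norm a)^2 \<le> (1-t) * R^2" using h1 assms(5) by (simp add: mult_left_mono)
    moreover have "t * (norm b)^2 \<le> t * R^2" using h2 assms(4) by (simp add: mult_left_mono)
    moreover have "t*(1-t)*(norm (a - b))^2 > 0" using h3 pos by simp
    ultimately show "(1-t) * (norm a)^2 + t * (norm b)^2 - t*(1-t)*(norm (a - b))^2 < R^2"
      by (simp add: algebra_simps)
  qed
  hence "norm ((1 - t) *\<^sub>R a + t *\<^sub>R b) < R"
    using R0 by (meson abs_le_square_iff abs_norm_cancel not_less power2_less_imp_less)
  thus ?thesis by (simp add: dist_norm e)
qed

lemma point_lemma:
  fixes G :: "disk set" and \<delta> :: real and p :: "real^2"
  assumes finG: "finite G" and Rpos: "\<forall>D\<in>G. radius D + \<delta> > 0"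
    and inG: "\<forall>D\<in>G. p \<in> inflated D \<delta>"
    and no3: "\<not> (\<exists>D1\<in>G. \<exists>D2\<in>G. \<exists>D3\<in>G.
          D1 \<noteq> D2 \<and> D1 \<noteq> D3 \<and> D2 \<noteq> D3 \<and>
          p \<in> inflated_circle D1 \<delta> \<and> p \<in> inflated_circle D2 \<delta> \<and> p \<in> inflated_circle D3 \<delta>)"
    and no2: "\<not> (\<exists>D1\<in>G. \<exists>D2\<in>G. D1 \<noteq> D2 \<and> tangent_point (inflated D1 \<delta>) (inflated D2 \<delta>) p)"
  shows "\<exists>q. \<forall>D\<in>G. dist (center D) q < radius D + \<delta>"
proof -
  define A where "A = {D\<in>G. dist (center D) p = radius D + \<delta>}"
  have le: "\<forall>D\<in>G. dist (center D) p \<le> radius D + \<delta>"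
    using inG by (simp add: inflated_def)
  have "\<exists>q0. q0 \<noteq> p \<and> (\<forall>D\<in>A. dist (center D) q0 \<le> radius D + \<delta>)"
  proof (cases "A = {}")
    case True
    have "p + axis 1 1 \<noteq> p" by (simp add: axis_eq_0_iff)
    thus ?thesis using True by blast
  next
    case False
    then obtain D1 where D1: "D1 \<in> A" by blast
    show ?thesis
    proof (cases "A = {D1}")
      case True
      have "dist (center D1) p = radius D1 + \<delta>" "radius D1 + \<delta> > 0"
        using D1 Rpos by (auto simp: A_def)
      hence "center D1 \<noteq> p" "0 \<le> radius D1 + \<delta>" by auto
      thus ?thesis using True by (intro exI[of _ "center D1"]) auto
    next
      case False
      then obtain D2 where D2: "D2 \<in> A" "D2 \<noteq> D1" using D1 by blast
      have AD: "A = {D1, D2}"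
      proof (rule ccontr)
        assume "A \<noteq> {D1, D2}"
        then obtain D3 where "D3 \<in> A" "D3 \<noteq> D1" "D3 \<noteq> D2" using D1 D2 by blast
        thus False using no3 D1 D2 by (auto simp: A_def inflated_circle_def)
      qed
      have "\<not> tangent_point (inflated D1 \<delta>) (inflated D2 \<delta>) p"
        using no2 D1 D2 by (auto simp: A_def)
      moreover have "p \<in> inflated D1 \<delta> \<inter> inflated D2 \<delta>"
        using D1 D2 inG by (auto simp: A_def)
      ultimately obtain q0 where "q0 \<in> inflated D1 \<delta> \<inter> inflated D2 \<delta>" "q0 \<noteq> p"
        unfolding tangent_point_def by blast
      thus ?thesis using AD by (intro exI[of _ q0]) (auto simp: inflated_def)
    qed
  qed
  then obtain q0 where q0: "q0 \<noteq> p" "\<forall>D\<in>A. dist (center D) q0 \<le> radius D + \<delta>" by blast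
  define U where "U = (\<Inter>D\<in>G - A. ball (center D) (radius D + \<delta>))"
  have "open U" unfolding U_def using finG by (intro open_INT) auto
  moreover have "p \<in> U" unfolding U_def using le by (auto simp: A_def)
  ultimately obtain e where e: "e > 0" "ball p e \<subseteq> U" using open_contains_ball by blast
  have n0: "norm (q0 - p) > 0" using q0 by simp
  define t where "t = min (1/2) (e / (2 * norm (q0 - p)))"
  have t: "0 < t" "t < 1" using e n0 by (auto simp: t_def)
  define q where "q = p + t *\<^sub>R (q0 - p)"
  have "dist p q = t * norm (q0 - p)" using t by (simp add: q_def dist_norm)
  also have "\<dots> \<le> e / (2 * norm (q0 - p)) * norm (q0 - p)"
    using n0 by (intro mult_right_mono) (auto simp: t_def)
  also have "\<dots> = e/2" using n0 by simp
  finally have "q \<in> U" using e by (intro subsetD[OF e(2)]) simp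
  hence "\<forall>D\<in>G - A. dist (center D) q < radius D + \<delta>" by (auto simp: U_def)
  moreover have "\<forall>D\<in>A. dist (center D) q < radius D + \<delta>"
    using strict_conv[OF _ _ q0(1)[symmetric] t] q0(2) by (auto simp: A_def q_def)
  ultimately show ?thesis by blast
qed

theorem lemma2:
  fixes \<D> :: "disk set" and \<delta>s :: real and p1 p2 :: "real^2"
  assumes fin: "finite \<D>" and ne: "\<D> \<noteq> {}"
    and pos: "\<forall>D\<in>\<D>. radius D > 0"
    and no_contain: "\<forall>D\<in>\<D>. \<forall>D'\<in>\<D>. D \<noteq> D' \<longrightarrow> \<not> (disk_set D \<subseteq> disk_set D')"
    and min_feas: "\<delta>s \<ge> 0" "\<exists>q1 q2. stabs \<D> \<delta>s q1 q2"
    and min_least: "\<forall>\<delta>\<ge>0. (\<exists>q1 q2. stabs \<D> \<delta> q1 q2) \<longrightarrow> \<delta>s \<le> \<delta>"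
    and p_stab: "stabs \<D> \<delta>s p1 p2"
  shows "\<delta>s = 0
    \<or> (\<exists>p\<in>{p1, p2}. \<exists>D1\<in>\<D>. \<exists>D2\<in>\<D>. \<exists>D3\<in>\<D>.
          D1 \<noteq> D2 \<and> D1 \<noteq> D3 \<and> D2 \<noteq> D3 \<and>
          p \<in> inflated_circle D1 \<delta>s \<and> p \<in> inflated_circle D2 \<delta>s \<and> p \<in> inflated_circle D3 \<delta>s)
    \<or> (\<exists>p\<in>{p1, p2}. \<exists>D1\<in>\<D>. \<exists>D2\<in>\<D>.
          D1 \<noteq> D2 \<and> tangent_point (inflated D1 \<delta>s) (inflated D2 \<delta>s) p)"
proof (rule ccontr)
  assume neg: "\<not> ?thesis"
  hence d0: "\<delta>s > 0" using min_feas(1) by auto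
  have Rp: "\<forall>D\<in>\<D>. radius D + \<delta>s > 0" using pos d0 by (auto intro: add_pos_pos)
  define G1 where "G1 = {D\<in>\<D>. p1 \<in> inflated D \<delta>s}"
  define G2 where "G2 = {D\<in>\<D>. p2 \<in> inflated D \<delta>s}"
  have "\<exists>q. \<forall>D\<in>G1. dist (center D) q < radius D + \<delta>s"
  proof (rule point_lemma)
    show "finite G1" using fin by (simp add: G1_def)
    show "\<forall>D\<in>G1. radius D + \<delta>s > 0" using Rp by (simp add: G1_def)
    show "\<forall>D\<in>G1. p1 \<in> inflated D \<delta>s" by (simp add: G1_def)
  qed (use neg in \<open>unfold G1_def, blast+\<close>)
  then obtain q1 where q1: "\<forall>D\<in>G1. dist (center D) q1 < radius D + \<delta>s" by blast
  have "\<exists>q. \<forall>D\<in>G2. dist (center D) q < radius D + \<delta>s"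
  proof (rule point_lemma)
    show "finite G2" using fin by (simp add: G2_def)
    show "\<forall>D\<in>G2. radius D + \<delta>s > 0" using Rp by (simp add: G2_def)
    show "\<forall>D\<in>G2. p2 \<in> inflated D \<delta>s" by (simp add: G2_def)
  qed (use neg in \<open>unfold G2_def, blast+\<close>)
  then obtain q2 where q2: "\<forall>D\<in>G2. dist (center D) q2 < radius D + \<delta>s" by blast
  define s where "s D = max (radius D + \<delta>s - dist (center D) q1) (radius D + \<delta>s - dist (center D) q2)" for D
  have spos: "\<forall>D\<in>\<D>. s D > 0"
  proof
    fix D assume D: "D \<in> \<D>"
    hence "D \<in> G1 \<or> D \<in> G2" using p_stab by (auto simp: stabs_def G1_def G2_def)
    thus "s D > 0" using q1 q2 by (auto simp: s_def less_max_iff_disj)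
  qed
  define m where "m = Min (s ` \<D>)"
  have m0: "m > 0" unfolding m_def using fin ne spos by auto
  have ms: "\<forall>D\<in>\<D>. m \<le> s D" unfolding m_def using fin by auto
  define \<delta>' where "\<delta>' = max 0 (\<delta>s - m/2)"
  have "stabs \<D> \<delta>' q1 q2" unfolding stabs_def
  proof
    fix D assume D: "D \<in> \<D>"
    have "m \<le> s D" using ms D by auto
    hence "dist (center D) q1 \<le> radius D + \<delta>' \<or> dist (center D) q2 \<le> radius D + \<delta>'"
      unfolding s_def \<delta>'_def using m0 by (auto simp: le_max_iff_disj)
    thus "inflated D \<delta>' \<inter> {q1, q2} \<noteq> {}" by (auto simp: inflated_def)
  qed
  moreover have "\<delta>' \<ge> 0" by (simp add: \<delta>'_def)
  ultimately have "\<delta>s \<le> \<delta>'" using min_least by blast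
  moreover have "\<delta>' < \<delta>s" using d0 m0 by (simp add: \<delta>'_def)
  ultimately show False by simp
qed

end
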